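(* Let $\Pi$ be a protocol and $\sigma,\sigma'\in\mathrm{br}(\Pi)$ be two sender best responses such that under each of $(\Pi,\sigma)$ and $(\Pi,\sigma')$ the game ends with probability $1$. Then $U^R(\Pi,\sigma)=U^R(\Pi,\sigma')$.
   Context: Setting. The state of nature is $\theta\in\Theta=\{H,L\}$ with prior $\Pr(\theta=H)=p\in(0,1)$. A sender privately observes $\theta$; a receiver does not. $S$ is a finite signal set; conditional on $\theta$, signals are i.i.d. with distribution $\pi_\theta$ on $S$, where $\pi_\theta(s)>0$ for all $s\in S,\theta\in\Theta$, and $\pi_H\neq\pi_L$. The receiver has a finite set of memory states $M$ and chooses a protocol $\Pi=(f,g,a)$: a transition function $f:M\times S\to\Delta(M)$ ($f(i,s)(j)$ is the probability of moving from memory state $i$ to $j$ after signal $s$), an initial distribution $g\in\Delta(M)$ of $m_0$, and an action rule $a:M\to[0,1]$ (probability of action $H$ if the game ends in that memory state). A sender strategy is $\sigma:M\times\Theta\to[0,1]$, the probability of stopping in the current memory state given $\theta$. Timing: $m_0\sim g$; in each period $t=0,1,\dots$, with current memory state $m_t$, the game ends if $m_t$ is absorbing ($f(m_t,s)(m_t)=1$ for all $s$); otherwise the sender stops with probability $\sigma(m_t,\theta)$, ending the game; if not stopped, a signal $s_t\sim\pi_\theta$ is generated and $m_{t+1}\sim f(m_t,s_t)$. When the game ends in state $m_t$ the receiver takes action $H$ with probability $a(m_t)$ and $L$ otherwise. The receiver's payoff is $1$ if the action equals $\theta$ and $0$ otherwise; the sender's payoff is $1$ if the action is $H$ and $0$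 otherwise; there is no discounting; if the game never ends both get $0$. $U^S(\Pi,\sigma),U^R(\Pi,\sigma)$ denote expected payoffs and $\mathrm{br}(\Pi)=\arg\sup_\sigma U^S(\Pi,\sigma)$ is the set of sender best responses. *)

theory Defs
  imports "HOL-Probability.Probability"
begin

datatype theta = H | L

text \<open>A protocol is (f, g, a): transitions f m s (a pmf on memory states),
  initial distribution g, action rule a (probability of action H).
  Signal distributions: pi theta. A sender strategy sigma m theta is the
  probability of stopping in memory state m given theta.\<close>

definition absorbing :: "('m \<Rightarrow> 's \<Rightarrow> 'm pmf) \<Rightarrow> 'm \<Rightarrow> bool" where
  "absorbing f m \<longleftrightarrow> (\<forall>s. pmf (f m s) m = 1)"

text \<open>Probability that the game ends in period t given current state m
  (conditional on reaching it).\<close>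
definition stop_prob :: "('m \<Rightarrow> 's \<Rightarrow> 'm pmf) \<Rightarrow> ('m \<Rightarrow> theta \<Rightarrow> real) \<Rightarrow> theta \<Rightarrow> 'm \<Rightarrow> real" where
  "stop_prob f \<sigma> \<theta> m = (if absorbing f m then 1 else \<sigma> m \<theta>)"

text \<open>alive_dist ... t m = probability (given theta) that the game has not ended
  before period t and m_t = m.\<close>
primrec alive_dist :: "(theta \<Rightarrow> 's::finite pmf) \<Rightarrow> ('m::finite \<Rightarrow> 's \<Rightarrow> 'm pmf) \<Rightarrow> 'm pmf
    \<Rightarrow> ('m \<Rightarrow> theta \<Rightarrow> real) \<Rightarrow> theta \<Rightarrow> nat \<Rightarrow> 'm \<Rightarrow> real" where
  "alive_dist \<pi> f g \<sigma> \<theta> 0 m = pmf g m"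
| "alive_dist \<pi> f g \<sigma> \<theta> (Suc t) m =
     (\<Sum>i\<in>UNIV. alive_dist \<pi> f g \<sigma> \<theta> t i * (1 - stop_prob f \<sigma> \<theta> i)
                  * (\<Sum>s\<in>UNIV. pmf (\<pi> \<theta>) s * pmf (f i s) m))"

definition end_prob :: "(theta \<Rightarrow> 's::finite pmf) \<Rightarrow> ('m::finite \<Rightarrow> 's \<Rightarrow> 'm pmf) \<Rightarrow> 'm pmf
    \<Rightarrow> ('m \<Rightarrow> theta \<Rightarrow> real) \<Rightarrow> theta \<Rightarrow> 'm \<Rightarrow> real" where
  "end_prob \<pi> f g \<sigma> \<theta> m = (\<Sum>t. alive_dist \<pi> f g \<sigma> \<theta> t m * stop_prob f \<sigma> \<theta> m)"

definition ends_surely :: "real \<Rightarrow> (theta \<Rightarrow> 's::finite pmf) \<Rightarrow> ('m::finite \<Rightarrow> 's \<Rightarrow> 'm pmf) \<Rightarrow> 'm pmf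
    \<Rightarrow> ('m \<Rightarrow> theta \<Rightarrow> real) \<Rightarrow> bool" where
  "ends_surely p \<pi> f g \<sigma> \<longleftrightarrow>
     p * (\<Sum>m\<in>UNIV. end_prob \<pi> f g \<sigma> H m) + (1 - p) * (\<Sum>m\<in>UNIV. end_prob \<pi> f g \<sigma> L m) = 1"

definition U_S :: "real \<Rightarrow> (theta \<Rightarrow> 's::finite pmf) \<Rightarrow> ('m::finite \<Rightarrow> 's \<Rightarrow> 'm pmf) \<Rightarrow> 'm pmf
    \<Rightarrow> ('m \<Rightarrow> real) \<Rightarrow> ('m \<Rightarrow> theta \<Rightarrow> real) \<Rightarrow> real" where
  "U_S p \<pi> f g a \<sigma> =
     p * (\<Sum>m\<in>UNIV. end_prob \<pi> f g \<sigma> H m * a m)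
   + (1 - p) * (\<Sum>m\<in>UNIV. end_prob \<pi> f g \<sigma> L m * a m)"

definition U_R :: "real \<Rightarrow> (theta \<Rightarrow> 's::finite pmf) \<Rightarrow> ('m::finite \<Rightarrow> 's \<Rightarrow> 'm pmf) \<Rightarrow> 'm pmf
    \<Rightarrow> ('m \<Rightarrow> real) \<Rightarrow> ('m \<Rightarrow> theta \<Rightarrow> real) \<Rightarrow> real" where
  "U_R p \<pi> f g a \<sigma> =
     p * (\<Sum>m\<in>UNIV. end_prob \<pi> f g \<sigma> H m * a m)
   + (1 - p) * (\<Sum>m\<in>UNIV. end_prob \<pi> f g \<sigma> L m * (1 - a m))"

definition valid_strategy :: "('m \<Rightarrow> theta \<Rightarrow> real) \<Rightarrow> bool" where
  "valid_strategy \<sigma> \<longleftrightarrow> (\<forall>m \<theta>. 0 \<le> \<sigma> m \<theta> \<and> \<sigma> m \<theta> \<le> 1)"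

definition br :: "real \<Rightarrow> (theta \<Rightarrow> 's::finite pmf) \<Rightarrow> ('m::finite \<Rightarrow> 's \<Rightarrow> 'm pmf) \<Rightarrow> 'm pmf
    \<Rightarrow> ('m \<Rightarrow> real) \<Rightarrow> ('m \<Rightarrow> theta \<Rightarrow> real) set" where
  "br p \<pi> f g a = {\<sigma>. valid_strategy \<sigma> \<and>
      (\<forall>\<sigma>'. valid_strategy \<sigma>' \<longrightarrow> U_S p \<pi> f g a \<sigma>' \<le> U_S p \<pi> f g a \<sigma>)}"

end

theory Submission
  imports Defs
begin

lemma alive_cong:
  assumes "\<And>m. \<sigma>1 m \<theta> = \<sigma>2 m \<theta>"
  shows "alive_dist \<pi> f g \<sigma>1 \<theta> t m = alive_dist \<pi> f g \<sigma>2 \<theta> t m"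
proof -
  have sp: "\<And>i. stop_prob f \<sigma>1 \<theta> i = stop_prob f \<sigma>2 \<theta> i"
    using assms by (simp add: stop_prob_def)
  show ?thesis
    by (induction t arbitrary: m) (simp_all add: sp)
qed

lemma end_cong:
  assumes "\<And>m. \<sigma>1 m \<theta> = \<sigma>2 m \<theta>"
  shows "end_prob \<pi> f g \<sigma>1 \<theta> m = end_prob \<pi> f g \<sigma>2 \<theta> m"
proof -
  have sp: "\<And>i. stop_prob f \<sigma>1 \<theta> i = stop_prob f \<sigma>2 \<theta> i"
    using assms by (simp add: stop_prob_def)
  have "\<And>t. alive_dist \<pi> f g \<sigma>1 \<theta> t m * stop_prob f \<sigma>1 \<theta> m
      = alive_dist \<pi> f g \<sigma>2 \<theta> t m * stop_prob f \<sigma>2 \<theta> m"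
    using alive_cong[of \<sigma>1 \<theta> \<sigma>2, OF assms] sp by metis
  then show ?thesis unfolding end_prob_def by simp
qed

lemma stop_bounds:
  assumes "valid_strategy \<sigma>"
  shows "0 \<le> stop_prob f \<sigma> \<theta> m" "stop_prob f \<sigma> \<theta> m \<le> 1"
  using assms by (auto simp: stop_prob_def valid_strategy_def)

lemma alive_nonneg:
  assumes "valid_strategy \<sigma>"
  shows "0 \<le> alive_dist \<pi> f g \<sigma> \<theta> t m"
proof (induction t arbitrary: m)
  case 0 then show ?case by simp
next
  case (Suc t)
  show ?case
    unfolding alive_dist.simps
    by (intro sum_nonneg mult_nonneg_nonneg Suc.IH)
       (simp_all add: stop_bounds(2)[OF assms])
qed

lemma sum_trans_one:
  fixes \<pi> :: "theta \<Rightarrow> 's::finite pmf" and f :: "'m::finite \<Rightarrow> 's \<Rightarrow> 'm pmf"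
  shows "(\<Sum>m\<in>UNIV. \<Sum>s\<in>UNIV. pmf (\<pi> \<theta>) s * pmf (f i s) m) = 1"
proof -
  have "(\<Sum>m\<in>UNIV. \<Sum>s\<in>UNIV. pmf (\<pi> \<theta>) s * pmf (f i s) m)
      = (\<Sum>s\<in>UNIV. pmf (\<pi> \<theta>) s * (\<Sum>m\<in>UNIV. pmf (f i s) m))"
    by (subst sum.swap) (simp add: sum_distrib_left)
  also have "\<dots> = (\<Sum>s\<in>UNIV. pmf (\<pi> \<theta>) s)"
    by (simp add: sum_pmf_eq_1)
  also have "\<dots> = 1" by (simp add: sum_pmf_eq_1)
  finally show ?thesis .
qed

lemma alive_step:
  fixes \<pi> :: "theta \<Rightarrow> 's::finite pmf" and f :: "'m::finite \<Rightarrow> 's \<Rightarrow> 'm pmf"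
  shows "(\<Sum>m\<in>UNIV. alive_dist \<pi> f g \<sigma> \<theta> (Suc t) m)
    = (\<Sum>m\<in>UNIV. alive_dist \<pi> f g \<sigma> \<theta> t m)
      - (\<Sum>m\<in>UNIV. alive_dist \<pi> f g \<sigma> \<theta> t m * stop_prob f \<sigma> \<theta> m)"
proof -
  have "(\<Sum>m\<in>UNIV. alive_dist \<pi> f g \<sigma> \<theta> (Suc t) m)
     = (\<Sum>i\<in>UNIV. alive_dist \<pi> f g \<sigma> \<theta> t i * (1 - stop_prob f \<sigma> \<theta> i)
          * (\<Sum>m\<in>UNIV. \<Sum>s\<in>UNIV. pmf (\<pi> \<theta>) s * pmf (f i s) m))"
    apply (simp only: alive_dist.simps)
    apply (subst sum.swap)
    apply (simp add: sum_distrib_left)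
    done
  also have "\<dots> = (\<Sum>i\<in>UNIV. alive_dist \<pi> f g \<sigma> \<theta> t i * (1 - stop_prob f \<sigma> \<theta> i))"
    by (simp add: sum_trans_one)
  also have "\<dots> = (\<Sum>m\<in>UNIV. alive_dist \<pi> f g \<sigma> \<theta> t m)
      - (\<Sum>m\<in>UNIV. alive_dist \<pi> f g \<sigma> \<theta> t m * stop_prob f \<sigma> \<theta> m)"
    by (simp add: right_diff_distrib sum_subtractf)
  finally show ?thesis .
qed

lemma partial_le:
  fixes \<pi> :: "theta \<Rightarrow> 's::finite pmf" and f :: "'m::finite \<Rightarrow> 's \<Rightarrow> 'm pmf"
  assumes "valid_strategy \<sigma>"
  shows "(\<Sum>t<n. \<Sum>m\<in>UNIV. alive_dist \<pi> f g \<sigma> \<theta> t m * stop_prob f \<sigma> \<theta> m)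
      = 1 - (\<Sum>m\<in>UNIV. alive_dist \<pi> f g \<sigma> \<theta> n m)"
proof (induction n)
  case 0 then show ?case by (simp add: sum_pmf_eq_1)
next
  case (Suc n) then show ?case using alive_step[of \<pi> f g \<sigma> \<theta> n] by simp
qed

lemma total_le_one:
  fixes \<pi> :: "theta \<Rightarrow> 's::finite pmf" and f :: "'m::finite \<Rightarrow> 's \<Rightarrow> 'm pmf"
  assumes v: "valid_strategy \<sigma>"
  shows "(\<Sum>m\<in>UNIV. end_prob \<pi> f g \<sigma> \<theta> m) \<le> 1"
proof -
  define c where "c t m = alive_dist \<pi> f g \<sigma> \<theta> t m * stop_prob f \<sigma> \<theta> m" for t m
  have cnn: "0 \<le> c t m" for t m
    unfolding c_def by (intro mult_nonneg_nonneg alive_nonneg[OF v] stop_bounds(1)[OF v])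
  have An: "0 \<le> (\<Sum>m\<in>UNIV. alive_dist \<pi> f g \<sigma> \<theta> n m)" for n
    by (intro sum_nonneg alive_nonneg[OF v])
  have P: "(\<Sum>t<n. \<Sum>m\<in>UNIV. c t m) \<le> 1" for n
    using partial_le[OF v, of \<pi> f g \<theta> n] An[of n] unfolding c_def by simp
  have sm: "summable (\<lambda>t. c t m)" for m
  proof (rule summableI_nonneg_bounded[where x=1])
    show "0 \<le> c t m" for t by (rule cnn)
    show "(\<Sum>t<n. c t m) \<le> 1" for n
    proof -
      have "(\<Sum>t<n. c t m) \<le> (\<Sum>t<n. \<Sum>m\<in>UNIV. c t m)"
        by (intro sum_mono member_le_sum) (auto simp: cnn)
      then show ?thesis using P[of n] by simp
    qed
  qed
  have "(\<Sum>m\<in>UNIV. end_prob \<pi> f g \<sigma> \<theta> m) = (\<Sum>m\<in>UNIV. \<Sum>t. c t m)"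
    unfolding end_prob_def c_def by simp
  also have "\<dots> = (\<Sum>t. \<Sum>m\<in>UNIV. c t m)"
    using sm by (simp add: suminf_sum)
  also have "\<dots> \<le> 1"
    by (rule suminf_le_const) (use sm P in \<open>auto intro: summable_sum\<close>)
  finally show ?thesis .
qed

theorem lemma1:
  fixes p :: real
    and \<pi> :: "theta \<Rightarrow> 's::finite pmf"
    and f :: "'m::finite \<Rightarrow> 's \<Rightarrow> 'm pmf"
    and g :: "'m pmf"
    and a :: "'m \<Rightarrow> real"
    and \<sigma> \<sigma>' :: "'m \<Rightarrow> theta \<Rightarrow> real"
  assumes "0 < p" and "p < 1"
    and "\<forall>\<theta> s. pmf (\<pi> \<theta>) s > 0"
    and "\<pi> H \<noteq> \<pi> L"
    and "\<forall>m. 0 \<le> a m \<and> a m \<le> 1"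
    and "\<sigma> \<in> br p \<pi> f g a" and "\<sigma>' \<in> br p \<pi> f g a"
    and "ends_surely p \<pi> f g \<sigma>" and "ends_surely p \<pi> f g \<sigma>'"
  shows "U_R p \<pi> f g a \<sigma> = U_R p \<pi> f g a \<sigma>'"
proof -
  have v1: "valid_strategy \<sigma>" and v2: "valid_strategy \<sigma>'"
    and b1: "\<And>s. valid_strategy s \<Longrightarrow> U_S p \<pi> f g a s \<le> U_S p \<pi> f g a \<sigma>"
    and b2: "\<And>s. valid_strategy s \<Longrightarrow> U_S p \<pi> f g a s \<le> U_S p \<pi> f g a \<sigma>'"
    using assms(6,7) by (auto simp: br_def)
  define X where "X s = (\<Sum>m\<in>UNIV. end_prob \<pi> f g s H m * a m)" for s
  define Y where "Y s = (\<Sum>m\<in>UNIV. end_prob \<pi> f g s L m * a m)" for s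
  define E where "E s \<theta> = (\<Sum>m\<in>UNIV. end_prob \<pi> f g s \<theta> m)" for s \<theta>
  have US: "U_S p \<pi> f g a s = p * X s + (1 - p) * Y s" for s
    by (simp add: U_S_def X_def Y_def)
  have UR: "U_R p \<pi> f g a s = p * X s + (1 - p) * (E s L - Y s)" for s
    by (simp add: U_R_def X_def Y_def E_def algebra_simps sum_subtractf)
  have E1: "E s L = 1" if "valid_strategy s" "ends_surely p \<pi> f g s" for s
  proof -
    have "E s H \<le> 1" "E s L \<le> 1" using total_le_one[OF that(1)] E_def by auto
    moreover have "p * E s H + (1 - p) * E s L = 1"
      using that(2) by (simp add: ends_surely_def E_def)
    moreover have "p * E s H \<le> p" using assms(1) \<open>E s H \<le> 1\<close>
      using mult_left_mono[of _ 1] by fastforce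
    moreover have "(1 - p) * E s L \<le> (1 - p)" using assms(2) \<open>E s L \<le> 1\<close>
      using mult_left_mono[of _ 1] by fastforce
    moreover have "\<And>u v. u + v = 1 \<Longrightarrow> u \<le> p \<Longrightarrow> v \<le> 1 - p \<Longrightarrow> v = 1 - p"
      by linarith
    ultimately have "(1 - p) * E s L = (1 - p) * 1" by (metis mult_1_right)
    then show ?thesis using assms(2) by simp
  qed
  define h1 where "h1 m \<theta> = (if \<theta> = H then \<sigma> m H else \<sigma>' m L)" for m \<theta>
  define h2 where "h2 m \<theta> = (if \<theta> = H then \<sigma>' m H else \<sigma> m L)" for m \<theta>
  have vh1: "valid_strategy h1" using v1 v2 by (simp add: valid_strategy_def h1_def)
  have vh2: "valid_strategy h2" using v1 v2 by (simp add: valid_strategy_def h2_def)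
  have "X h1 = X \<sigma>" unfolding X_def
    by (simp add: end_cong[of h1 H \<sigma>] h1_def)
  moreover have "Y h1 = Y \<sigma>'" unfolding Y_def
    by (simp add: end_cong[of h1 L \<sigma>'] h1_def)
  moreover have "X h2 = X \<sigma>'" unfolding X_def
    by (simp add: end_cong[of h2 H \<sigma>'] h2_def)
  moreover have "Y h2 = Y \<sigma>" unfolding Y_def
    by (simp add: end_cong[of h2 L \<sigma>] h2_def)
  ultimately have i1: "p * X \<sigma> + (1 - p) * Y \<sigma>' \<le> p * X \<sigma> + (1 - p) * Y \<sigma>"
    and i2: "p * X \<sigma>' + (1 - p) * Y \<sigma> \<le> p * X \<sigma>' + (1 - p) * Y \<sigma>'"
    using b1[OF vh1] b2[OF vh2] unfolding US by simp_all
  have i3: "p * X \<sigma>' + (1 - p) * Y \<sigma>' \<le> p * X \<sigma> + (1 - p) * Y \<sigma>"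
    and i4: "p * X \<sigma> + (1 - p) * Y \<sigma> \<le> p * X \<sigma>' + (1 - p) * Y \<sigma>'"
    using b1[OF v2] b2[OF v1] unfolding US by simp_all
  have "(1 - p) * Y \<sigma>' \<le> (1 - p) * Y \<sigma>" "(1 - p) * Y \<sigma> \<le> (1 - p) * Y \<sigma>'"
    using i1 i2 by linarith+
  then have Yeq: "Y \<sigma> = Y \<sigma>'" using assms(2)
    by (simp add: mult_le_cancel_left_pos)
  have "p * X \<sigma> = p * X \<sigma>'" using i3 i4 unfolding Yeq by linarith
  then have "X \<sigma> = X \<sigma>'" using assms(1) by simp
  then show ?thesis
    using Yeq UR E1[OF v1 assms(8)] E1[OF v2 assms(9)] by simp
qed

end
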